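(* For every integer $M\ge0$, the poset $(\mathrm{RL},\le_{RL})$ is noetherian: it contains no infinite antichain.
   Context: Fix an integer $M\ge0$. A reading list of type $(d,n)$ is a tuple $S=(S^1,\dots,S^n)$ of $d$-element subsets of $[Md]=\{1,\dots,Md\}$ (each $S^i$ viewed as an increasing word). $\mathrm{RL}$ denotes the set of all reading lists of all types. For $S=(S^1,\dots,S^n)$ of type $(d,n)$ and $T=(T^1,\dots,T^m)$ of type $(e,m)$, define $S\le_{RL}T$ iff there exist indices $1\le k_1<k_2<\cdots<k_n\le m$ and maps $f_i:S^i\to T^{k_i}$ ($i=1,\dots,n$), each strictly increasing, such that $f_i(x)=f_j(x)$ for all $i,j$ and all $x\in S^i\cap S^j$. An antichain is a sequence of pairwise incomparable elements. *)

theory Defs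
  imports Main
begin

definition reading_list_of_type :: "nat \<Rightarrow> nat \<Rightarrow> nat \<Rightarrow> nat set list \<Rightarrow> bool" where
  "reading_list_of_type M d n S \<longleftrightarrow>
     length S = n \<and> (\<forall>A \<in> set S. A \<subseteq> {1..M*d} \<and> card A = d)"

definition RL :: "nat \<Rightarrow> nat set list set" where
  "RL M = {S. \<exists>d n. reading_list_of_type M d n S}"

text \<open>The order S \<le>_RL T (indices are 0-based here).\<close>
definition rl_le :: "nat set list \<Rightarrow> nat set list \<Rightarrow> bool" where
  "rl_le S T \<longleftrightarrow>
     (\<exists>k :: nat \<Rightarrow> nat. \<exists>f :: nat \<Rightarrow> nat \<Rightarrow> nat.
        (\<forall>i j. i < j \<and> j < length S \<longrightarrow> k i < k j) \<and>
        (\<forall>i < length S. k i < length T) \<and>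
        (\<forall>i < length S. strict_mono_on (S ! i) (f i) \<and> f i ` (S ! i) \<subseteq> T ! (k i)) \<and>
        (\<forall>i < length S. \<forall>j < length S. \<forall>x \<in> S ! i \<inter> S ! j. f i x = f j x))"

end

theory Submission
  imports Defs "HOL-Library.Infinite_Set"
begin


definition emb :: "'a list \<Rightarrow> 'a list \<Rightarrow> bool" where
 "emb u v \<longleftrightarrow> (\<exists>g::nat\<Rightarrow>nat. (\<forall>x y. x < y \<and> y < length u \<longrightarrow> g x < g y) \<and>
    (\<forall>x<length u. g x < length v \<and> u!x = v!(g x)))"

lemma emb_Nil: "emb [] v" unfolding emb_def by auto

lemma emb_Cons: assumes "emb t t'" shows "emb (a#t) (a#t')"
proof -
  from assms obtain g where g1: "\<forall>x y. x < y \<and> y < length t \<longrightarrow> g x < g y"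
    and g2: "\<forall>x<length t. g x < length t' \<and> t!x = t'!(g x)" unfolding emb_def by blast
  define g' where "g' x = (case x of 0 \<Rightarrow> 0 | Suc y \<Rightarrow> Suc (g y))" for x
  have "\<forall>x y. x < y \<and> y < length (a#t) \<longrightarrow> g' x < g' y"
    using g1 by (auto simp: g'_def split: nat.splits)
  moreover have "\<forall>x<length (a#t). g' x < length (a#t') \<and> (a#t)!x = (a#t')!(g' x)"
    using g2 by (auto simp: g'_def nth_Cons split: nat.splits)
  ultimately show ?thesis unfolding emb_def by blast
qed

lemma emb_tl: assumes "emb u (tl v)" "v \<noteq> []" shows "emb u v"
proof -
  from assms obtain g where g1: "\<forall>x y. x < y \<and> y < length u \<longrightarrow> g x < g y"
    and g2: "\<forall>x<length u. g x < length (tl v) \<and> u!x = (tl v)!(g x)" unfolding emb_def by blast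
  have "\<forall>x<length u. Suc (g x) < length v \<and> u!x = v!(Suc (g x))"
    using g2 assms(2) by (auto simp: nth_tl)
  then show ?thesis using g1 unfolding emb_def
    by (intro exI[of _ "\<lambda>x. Suc (g x)"]) auto
qed

lemma set_tl_sub: "set (tl xs) \<subseteq> set xs" by (cases xs) auto

primrec pre :: "('a list \<Rightarrow> 'a) \<Rightarrow> nat \<Rightarrow> 'a list" where
  "pre ch 0 = []" | "pre ch (Suc n) = pre ch n @ [ch (pre ch n)]"

lemma length_pre[simp]: "length (pre ch n) = n" by (induction n) auto

lemma nth_pre: "i < n \<Longrightarrow> pre ch n ! i = ch (pre ch i)"
  by (induction n) (auto simp: nth_append less_Suc_eq)

lemma higman:
  fixes w :: "nat \<Rightarrow> 'a list"
  assumes "finite A" "\<forall>i. set (w i) \<subseteq> A"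
  shows "\<exists>i j. i < j \<and> emb (w i) (w j)"
proof (rule ccontr)
  assume nb: "\<not> ?thesis"
  define B where "B = {w :: nat \<Rightarrow> 'a list. (\<forall>i j. i < j \<longrightarrow> \<not> emb (w i) (w j)) \<and> (\<forall>i. set (w i) \<subseteq> A)}"
  have w0: "w \<in> B" using nb assms(2) unfolding B_def by blast
  define P where "P p x \<longleftrightarrow> (\<exists>w\<in>B. (\<forall>i<length p. w i = p!i) \<and> w (length p) = x)" for p x
  define ch where "ch p = arg_min length (P p)" for p
  define m where "m i = ch (pre ch i)" for i
  have ex: "\<exists>w\<in>B. \<forall>i<n. w i = m i" for n
  proof (induction n)
    case 0 then show ?case using w0 by blast
  next
    case (Suc n)
    then obtain w where w: "w \<in> B" "\<forall>i<n. w i = m i" by blast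
    have "P (pre ch n) (w n)" unfolding P_def using w by (auto simp: nth_pre m_def)
    then have "P (pre ch n) (ch (pre ch n))" unfolding ch_def by (rule arg_min_nat_lemma[THEN conjunct1])
    then obtain w' where "w' \<in> B" "\<forall>i<n. w' i = m i" "w' n = m n"
      unfolding P_def m_def by (auto simp: nth_pre)
    then show ?case by (metis less_Suc_eq)
  qed
  have minl: "length (m n) \<le> length (w n)" if "w \<in> B" "\<forall>i<n. w i = m i" for n w
  proof -
    have h: "P (pre ch n) (w n)" unfolding P_def using that by (auto simp: nth_pre m_def)
    from arg_min_nat_lemma[where P="P (pre ch n)" and m=length, OF h] h show ?thesis by (simp add: m_def ch_def)
  qed
  have mbad: "\<not> emb (m i) (m j)" if "i < j" for i j
  proof -
    obtain w where w: "w \<in> B" "\<forall>k<Suc j. w k = m k" using ex by blast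
    then have "w i = m i" "w j = m j" using that by auto
    moreover have "\<not> emb (w i) (w j)" using that w(1) unfolding B_def by blast
    ultimately show ?thesis by simp
  qed
  have mA: "set (m i) \<subseteq> A" for i
  proof -
    obtain w where w: "w \<in> B" "\<forall>k<Suc i. w k = m k" using ex by blast
    then have "w i = m i" by auto
    moreover have "set (w i) \<subseteq> A" using w(1) unfolding B_def by blast
    ultimately show ?thesis by simp
  qed
  have mne: "m i \<noteq> []" for i using mbad[of i "Suc i"] emb_Nil by fastforce
  have "\<exists>a\<in>A. infinite {i. hd (m i) = a}"
  proof (rule ccontr)
    assume "\<not> ?thesis"
    then have "finite (\<Union>a\<in>A. {i. hd (m i) = a})" using assms(1) by auto
    moreover have "(\<Union>a\<in>A. {i. hd (m i) = a}) = UNIV"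
    proof -
      have "hd (m x) \<in> A" for x using mA[of x] hd_in_set[OF mne[of x]] by blast
      then show ?thesis by blast
    qed
    ultimately show False by simp
  qed
  then obtain a where aA: "a \<in> A" and inf: "infinite {i. hd (m i) = a}" by blast
  define \<phi> where "\<phi> = enumerate {i. hd (m i) = a}"
  have sm: "strict_mono \<phi>" unfolding \<phi>_def using inf by (rule strict_mono_enumerate)
  have \<phi>a: "hd (m (\<phi> k)) = a" for k unfolding \<phi>_def using enumerate_in_set[OF inf] by auto
  define n0 where "n0 = \<phi> 0"
  define w' where "w' k = (if k < n0 then m k else tl (m (\<phi> (k - n0))))" for k
  have "w' \<in> B"
    unfolding B_def
  proof (intro CollectI conjI allI impI)
    fix i show "set (w' i) \<subseteq> A" unfolding w'_def
      using mA[of i] mA[of "\<phi> (i-n0)"] set_tl_sub[of "m (\<phi> (i - n0))"] by auto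
  next
    fix i j :: nat assume ij: "i < j"
    show "\<not> emb (w' i) (w' j)"
    proof (cases "j < n0")
      case True then show ?thesis using ij mbad by (simp add: w'_def)
    next
      case jn: False
      show ?thesis
      proof (cases "i < n0")
        case True
        have "\<phi> 0 \<le> \<phi> (j - n0)" using sm by (simp add: strict_mono_less_eq)
        then have "i < \<phi> (j - n0)" using True n0_def by simp
        moreover have "w' i = m i" "w' j = tl (m (\<phi> (j - n0)))" using True jn by (auto simp: w'_def)
        ultimately show ?thesis using mbad[of i "\<phi> (j - n0)"] emb_tl[OF _ mne[of "\<phi> (j - n0)"], of "m i"] by metis
      next
        case False
        have lt: "\<phi> (i - n0) < \<phi> (j - n0)" using sm ij False by (simp add: strict_mono_less)
        show ?thesis
        proof
          assume "emb (w' i) (w' j)"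
          then have "emb (tl (m (\<phi> (i - n0)))) (tl (m (\<phi> (j - n0))))" using False jn by (simp add: w'_def)
          then have "emb (a # tl (m (\<phi> (i - n0)))) (a # tl (m (\<phi> (j - n0))))" by (rule emb_Cons)
          then have "emb (m (\<phi> (i - n0))) (m (\<phi> (j - n0)))"
            using \<phi>a[of "i-n0"] \<phi>a[of "j-n0"] list.collapse[OF mne[of "\<phi> (i-n0)"]] list.collapse[OF mne[of "\<phi> (j-n0)"]] by simp
          then show False using mbad lt by blast
        qed
      qed
    qed
  qed
  moreover have "\<forall>i<n0. w' i = m i" by (simp add: w'_def)
  ultimately have "length (m n0) \<le> length (w' n0)" by (rule minl)
  moreover have "length (m n0) > 0" using mne[of n0] by simp
  moreover have "length (w' n0) = length (m n0) - 1" by (simp add: w'_def n0_def)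
  ultimately show False by linarith
qed

lemma higman_inf:
  fixes w :: "nat \<Rightarrow> 'a list" and I :: "nat set"
  assumes "finite A" "infinite I" "\<forall>i\<in>I. set (w i) \<subseteq> A"
  shows "\<exists>i j. i \<in> I \<and> j \<in> I \<and> i < j \<and> emb (w i) (w j)"
proof -
  have "\<forall>k. set ((w \<circ> enumerate I) k) \<subseteq> A" using assms(3) enumerate_in_set[OF assms(2)] by auto
  then obtain p q where "p < q" "emb ((w \<circ> enumerate I) p) ((w \<circ> enumerate I) q)"
    using higman[OF assms(1), of "w \<circ> enumerate I"] by blast
  moreover have "enumerate I p < enumerate I q" using strict_mono_enumerate[OF assms(2)] \<open>p<q\<close>
    by (simp add: strict_mono_less)
  ultimately show ?thesis using enumerate_in_set[OF assms(2), of p] enumerate_in_set[OF assms(2), of q]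
    by (intro exI[of _ "enumerate I p"] exI[of _ "enumerate I q"]) simp
qed



lemma rl_le_Nil: "rl_le [] T" unfolding rl_le_def by simp

lemma rl_le_rows: assumes "emb S T" shows "rl_le S T"
proof -
  from assms obtain g where g1: "\<forall>x y. x < y \<and> y < length S \<longrightarrow> g x < g y"
    and g2: "\<forall>x<length S. g x < length T \<and> S!x = T!(g x)" unfolding emb_def by blast
  show ?thesis unfolding rl_le_def
    by (rule exI[of _ g], rule exI[of _ "\<lambda>i x. x"]) (simp add: g1 g2 strict_mono_on_def)
qed

definition colw :: "nat \<Rightarrow> nat \<Rightarrow> nat set list \<Rightarrow> nat set list" where
  "colw N L S = map (\<lambda>x. {r. r < N \<and> x \<in> S!r}) [1..<L+1]"

lemma colw_nth: "x < L \<Longrightarrow> colw N L S ! x = {r. r < N \<and> Suc x \<in> S!r}"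
  by (simp add: colw_def del: upt_Suc)

lemma length_colw[simp]: "length (colw N L S) = L" by (simp add: colw_def)

lemma set_colw: "set (colw N L S) \<subseteq> Pow {..<N}" by (auto simp: colw_def)

lemma rl_le_cols:
  assumes "length S = N" "length T = N" "\<forall>A\<in>set S. A \<subseteq> {1..L}"
    and "emb (colw N L S) (colw N L' T)"
  shows "rl_le S T"
proof -
  from assms(4) obtain g where g1: "\<forall>x y. x < y \<and> y < L \<longrightarrow> g x < g y"
    and g2: "\<forall>x<L. g x < L' \<and> colw N L S!x = colw N L' T!(g x)" unfolding emb_def by auto
  have rng: "1 \<le> x \<and> x \<le> L" if "i < N" "x \<in> S!i" for i x
    using assms(1,3) that nth_mem by fastforce
  have sm: "strict_mono_on (S!i) (\<lambda>x. Suc (g (x - 1)))" if "i < N" for i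
    unfolding strict_mono_on_def
  proof (intro allI impI, elim conjE)
    fix x y assume "x \<in> S!i" "y \<in> S!i" "x < y"
    then have "x - 1 < y - 1 \<and> y - 1 < L" using rng[OF that] by fastforce
    then show "Suc (g (x - 1)) < Suc (g (y - 1))" using g1 by blast
  qed
  have im: "Suc (g (x - 1)) \<in> T!i" if "i < N" "x \<in> S!i" for i x
  proof -
    have x: "x - 1 < L" "Suc (x - 1) = x" using rng[OF that] by auto
    have "i \<in> colw N L S ! (x - 1)" using colw_nth[OF x(1)] x(2) that by simp
    then have "i \<in> colw N L' T ! (g (x - 1))" using g2 x(1) by simp
    then show ?thesis using colw_nth[of "g (x - 1)" L' N T] g2 x(1) by simp
  qed
  show ?thesis unfolding rl_le_def
  proof (rule exI[of _ "\<lambda>i. i"], rule exI[of _ "\<lambda>i x. Suc (g (x - 1))"], intro conjI allI impI ballI)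
    fix i assume "i < length S" then show "strict_mono_on (S ! i) (\<lambda>x. Suc (g (x - 1)))" using sm assms(1) by simp
  next
    fix i assume "i < length S" then show "(\<lambda>x. Suc (g (x - 1))) ` (S ! i) \<subseteq> T ! i" using im assms(1) by blast
  qed (use assms(1,2) in auto)
qed

lemma rl_le_common:
  assumes "\<forall>A\<in>set S. A \<subseteq> {1..L}" "finite X" "card X = L" "finite R"
    "R \<subseteq> {..<length T}" "length S \<le> card R" "\<forall>r\<in>R. X \<subseteq> T!r"
  shows "rl_le S T"
proof -
  define ks where "ks = sorted_list_of_set R"
  define xs where "xs = sorted_list_of_set X"
  have ks: "sorted_wrt (<) ks" "set ks = R" "length ks = card R"
    using assms(4) by (auto simp: ks_def strict_sorted_list_of_set)
  have xs: "sorted_wrt (<) xs" "set xs = X" "length xs = L"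
    using assms(2,3) by (auto simp: xs_def strict_sorted_list_of_set)
  have rng: "1 \<le> x \<and> x \<le> L" if "i < length S" "x \<in> S!i" for i x
    using assms(1) that nth_mem by fastforce
  have k1: "\<forall>i j. i < j \<and> j < length S \<longrightarrow> ks!i < ks!j"
  proof (intro allI impI, elim conjE)
    fix i j assume "i < j" "j < length S"
    then show "ks!i < ks!j" using ks assms(6) sorted_wrt_nth_less[of "(<)" ks i j] by linarith
  qed
  have kin: "ks ! i \<in> R" if "i < length S" for i 
  proof -
    have "i < length ks" using ks(3) assms(6) that by linarith
    then show ?thesis using ks(2) nth_mem by blast
  qed
  have k2: "\<forall>i<length S. ks!i < length T" using kin assms(5) by blast
  have sm: "strict_mono_on (S!i) (\<lambda>x. xs ! (x - 1))" if "i < length S" for i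
    unfolding strict_mono_on_def
  proof (intro allI impI, elim conjE)
    fix x y assume a: "x \<in> S!i" "y \<in> S!i" "x < y"
    have "x - 1 < y - 1" "y - 1 < length xs" using rng[OF that a(1)] rng[OF that a(2)] a(3) xs(3) by linarith+
    then show "xs ! (x - 1) < xs ! (y - 1)" using xs(1) by (rule sorted_wrt_nth_less[rotated 1])
  qed
  have im: "xs ! (x - 1) \<in> T ! (ks ! i)" if "i < length S" "x \<in> S!i" for i x
  proof -
    have "x - 1 < length xs" using rng[OF that] xs(3) by linarith
    then have "xs ! (x - 1) \<in> X" using xs(2) nth_mem by blast
    then show ?thesis using assms(7) kin[OF that(1)] by blast
  qed
  show ?thesis unfolding rl_le_def
  proof (rule exI[of _ "\<lambda>i. ks ! i"], rule exI[of _ "\<lambda>i x. xs ! (x - 1)"], intro conjI allI impI ballI)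
    fix i assume "i < length S" then show "strict_mono_on (S ! i) (\<lambda>x. xs ! (x - 1))" using sm by simp
  next
    fix i assume "i < length S" then show "(\<lambda>x. xs ! (x - 1)) ` (S ! i) \<subseteq> T ! (ks ! i)" using im by blast
  qed (use k1 k2 in auto)
qed



lemma exists_big:
  fixes g :: "'a \<Rightarrow> nat"
  assumes "finite C" "C \<noteq> {}"
  shows "\<exists>c\<in>C. sum g C \<le> card C * g c"
proof -
  have "Max (g ` C) \<in> g ` C" using assms by (intro Max_in) auto
  then obtain c where c1: "c \<in> C" "g c = Max (g ` C)" by auto
  have "\<forall>x\<in>C. g x \<le> g c" using c1(2) assms(1) by simp
  note c = c1(1) this
  then have "sum g C \<le> of_nat (card C) * g c" by (intro sum_bounded_above) auto
  then show ?thesis using c(1) by auto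
qed

lemma common_step:
  fixes T :: "nat set list"
  assumes Trows: "\<forall>r<length T. T!r \<subseteq> {1..M*e} \<and> card (T!r) = e"
    and X: "finite X" "card X = t" and R: "R \<subseteq> {..<length T}" "R \<noteq> {}"
    and XR: "\<forall>r\<in>R. X \<subseteq> T!r" and te: "2*(t+1) \<le> e"
  shows "\<exists>c R'. c \<notin> X \<and> R' \<subseteq> R \<and> card R \<le> card R' * (2*M) \<and> (\<forall>r\<in>R'. c \<in> T!r)"
proof -
  define C where "C = {1..M*e} - X"
  define cnt where "cnt c = card {r\<in>R. c \<in> T!r}" for c
  have finR: "finite R" using R(1) finite_subset by blast
  have finC: "finite C" unfolding C_def by simp
  have cnt_sum: "cnt c = (\<Sum>r\<in>R. if c \<in> T!r then 1 else 0)" for c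
    unfolding cnt_def using finR by (simp add: sum.inter_filter[symmetric])
  have row: "card (T!r - X) = (\<Sum>c\<in>C. if c \<in> T!r then 1 else 0)" if "r \<in> R" for r
  proof -
    have "T!r \<subseteq> {1..M*e}" using Trows R(1) that by auto
    then have "T!r - X = {c\<in>C. c \<in> T!r}" unfolding C_def by blast
    then show ?thesis using finC by (simp add: sum.inter_filter[symmetric])
  qed
  have rowc: "card (T!r - X) = e - t" if "r \<in> R" for r
  proof -
    have "finite (T!r)" using Trows R(1) that by (meson finite_atLeastAtMost finite_subset lessThan_iff subsetD)
    then show ?thesis using card_Diff_subset[OF X(1) XR[rule_format, OF that]] Trows R(1) that X(2) by auto
  qed
  have "sum cnt C = (\<Sum>r\<in>R. card (T!r - X))"
    unfolding cnt_sum using row by (simp add: sum.swap[of _ C R])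
  also have "\<dots> = card R * (e - t)" using rowc by simp
  finally have S: "sum cnt C = card R * (e - t)" .
  have cR: "card R > 0" using finR R(2) by (simp add: card_gt_0_iff)
  have "card R * (e - t) > 0" using cR te by simp
  then have "C \<noteq> {}" using S by auto
  then obtain c where c: "c \<in> C" "sum cnt C \<le> card C * cnt c" using exists_big[OF finC] by blast
  have "card C \<le> card {1..M*e}" unfolding C_def by (rule card_mono) auto
  then have "card C \<le> M * e" by simp
  then have A: "card R * (e - t) \<le> M * e * cnt c" using c(2) S by (metis mult_le_mono1 order_trans)
  have B: "e \<le> 2 * (e - t)" using te by simp
  have "card R * e \<le> card R * (2 * (e - t))" using B by simp
  also have "\<dots> = 2 * (card R * (e - t))" by simp
  also have "\<dots> \<le> 2 * (M * e * cnt c)" using A by simp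
  also have "\<dots> = (cnt c * (2 * M)) * e" by simp
  finally have "card R * e \<le> (cnt c * (2 * M)) * e" .
  then have "card R \<le> cnt c * (2 * M)" using te by simp
  moreover have "c \<notin> X" using c(1) unfolding C_def by simp
  ultimately show ?thesis unfolding cnt_def by (intro exI[of _ c] exI[of _ "{r\<in>R. c \<in> T!r}"]) auto
qed

lemma common_iter:
  fixes T :: "nat set list"
  assumes Trows: "\<forall>r<length T. T!r \<subseteq> {1..M*e} \<and> card (T!r) = e"
    and ne: "T \<noteq> []" and Le: "2*L \<le> e"
  shows "\<exists>X R. finite X \<and> card X = L \<and> R \<subseteq> {..<length T} \<and> R \<noteq> {} \<and>
     length T \<le> card R * (2*M)^L \<and> (\<forall>r\<in>R. X \<subseteq> T!r)"
  using Le
proof (induction L)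
  case 0
  then show ?case using ne by (intro exI[of _ "{}"] exI[of _ "{..<length T}"]) auto
next
  case (Suc L)
  then obtain X R where XR: "finite X" "card X = L" "R \<subseteq> {..<length T}" "R \<noteq> {}"
     "length T \<le> card R * (2*M)^L" "\<forall>r\<in>R. X \<subseteq> T!r" by auto
  obtain c R' where cR: "c \<notin> X" "R' \<subseteq> R" "card R \<le> card R' * (2*M)" "\<forall>r\<in>R'. c \<in> T!r"
    using common_step[OF Trows XR(1,2,3,4,6)] Suc.prems by auto
  have finR: "finite R" using XR(3) finite_subset by blast
  have "card R > 0" using finR XR(4) by (simp add: card_gt_0_iff)
  then have "card R' > 0" using cR(3) by (cases "card R' = 0") auto
  then have "R' \<noteq> {}" by auto
  moreover have "length T \<le> card R' * (2*M)^(Suc L)"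
  proof -
    have "length T \<le> card R * (2*M)^L" by fact
    also have "\<dots> \<le> card R' * (2*M) * (2*M)^L" using cR(3) by (rule mult_le_mono1)
    finally show ?thesis by (simp add: mult.assoc)
  qed
  ultimately show ?case using XR cR
    by (intro exI[of _ "insert c X"] exI[of _ R']) auto
qed



theorem mainTheorem7:
  fixes M :: nat
  shows "\<not> (\<exists>a :: nat \<Rightarrow> nat set list.
              (\<forall>i. a i \<in> RL M) \<and> (\<forall>i j. i \<noteq> j \<longrightarrow> \<not> rl_le (a i) (a j)))"
proof
  assume "\<exists>a :: nat \<Rightarrow> nat set list.
              (\<forall>i. a i \<in> RL M) \<and> (\<forall>i j. i \<noteq> j \<longrightarrow> \<not> rl_le (a i) (a j))"
  then obtain a :: "nat \<Rightarrow> nat set list" where aRL: "\<forall>i. a i \<in> RL M"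
    and anti: "\<forall>i j. i \<noteq> j \<longrightarrow> \<not> rl_le (a i) (a j)" by blast
  have contra: False if "i \<noteq> j" "rl_le (a i) (a j)" for i j using anti that by blast
  have ne: "a i \<noteq> []" for i
  proof
    assume "a i = []"
    then have "rl_le (a i) (a (Suc i))" using rl_le_Nil by simp
    then show False using contra[of i "Suc i"] by simp
  qed
  define dd where "dd i = card (hd (a i))" for i
  have rows: "\<forall>A\<in>set (a i). A \<subseteq> {1..M * dd i} \<and> card A = dd i" for i
  proof -
    from aRL obtain d n where "reading_list_of_type M d n (a i)" unfolding RL_def by blast
    then have h: "\<forall>A\<in>set (a i). A \<subseteq> {1..M*d} \<and> card A = d" unfolding reading_list_of_type_def by blast
    have "hd (a i) \<in> set (a i)" using ne[of i] by (rule hd_in_set)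
    then have "d = dd i" using h unfolding dd_def by simp
    then show ?thesis using h by simp
  qed
  consider (A) "\<exists>N. infinite {i. length (a i) = N}" | (B) "\<exists>D. infinite {i. dd i = D}"
    | (C) "\<forall>N. finite {i. length (a i) = N}" "\<forall>D. finite {i. dd i = D}" by blast
  then show False
  proof cases
    case A
    then obtain N where inf: "infinite {i. length (a i) = N}" by blast
    define w where "w i = colw N (M * dd i) (a i)" for i
    have "\<forall>i\<in>{i. length (a i) = N}. set (w i) \<subseteq> Pow {..<N}" unfolding w_def using set_colw by blast
    from higman_inf[OF _ inf this] obtain i j where ij: "length (a i) = N" "length (a j) = N" "i < j"
      "emb (w i) (w j)" by auto
    have "rl_le (a i) (a j)" using rl_le_cols[OF ij(1,2) _ ij(4)[unfolded w_def]] rows[of i] by blast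
    then show False using contra[of i j] ij(3) by simp
  next
    case B
    then obtain D where inf: "infinite {i. dd i = D}" by blast
    have "\<forall>i\<in>{i. dd i = D}. set (a i) \<subseteq> Pow {1..M*D}" using rows by blast
    from higman_inf[OF _ inf this] obtain i j where ij: "i < j" "emb (a i) (a j)" by auto
    then show False using contra rl_le_rows by (metis less_irrefl)
  next
    case C
    define n0 where "n0 = length (a 0)"
    define L where "L = M * dd 0"
    define K where "K = n0 * (2*M)^L"
    have f1: "finite {i. length (a i) < K}"
    proof -
      have "{i. length (a i) < K} = (\<Union>N\<in>{..<K}. {i. length (a i) = N})" by auto
      then show ?thesis using C(1) by simp
    qed
    have f2: "finite {i. dd i < 2*L}"
    proof -
      have "{i. dd i < 2*L} = (\<Union>D\<in>{..<2*L}. {i. dd i = D})" by auto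
      then show ?thesis using C(2) by simp
    qed
    have "finite (insert 0 ({i. length (a i) < K} \<union> {i. dd i < 2*L}))" using f1 f2 by simp
    then obtain j where j: "j \<notin> insert 0 ({i. length (a i) < K} \<union> {i. dd i < 2*L})"
      using ex_new_if_finite[OF infinite_UNIV_nat] by blast
    then have j0: "j \<noteq> 0" and jK: "K \<le> length (a j)" and jL: "2*L \<le> dd j" by auto
    have Trows: "\<forall>r<length (a j). a j!r \<subseteq> {1..M*dd j} \<and> card (a j!r) = dd j"
      using rows[of j] nth_mem by blast
    obtain X R where XR: "finite X" "card X = L" "R \<subseteq> {..<length (a j)}" "R \<noteq> {}"
      "length (a j) \<le> card R * (2*M)^L" "\<forall>r\<in>R. X \<subseteq> a j!r"
      using common_iter[OF Trows ne jL] by blast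
    have P: "(2*M)^L > 0"
    proof (cases "M = 0")
      case True then show ?thesis unfolding L_def by simp
    qed simp
    have "n0 * (2*M)^L \<le> card R * (2*M)^L" using jK XR(5) unfolding K_def by linarith
    then have nR: "n0 \<le> card R" using P by (meson mult_le_cancel2)
    have finR: "finite R" using XR(3) finite_subset by blast
    have "rl_le (a 0) (a j)"
      using rl_le_common[OF _ XR(1,2) finR XR(3) _ XR(6)] rows[of 0] nR unfolding n0_def L_def by blast
    then show False using contra[of 0 j] j0 by simp
  qed
qed

end
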